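(* For all nonnegative integers $a_1,a_2,s$, \[ F(a_1,a_2,s)=a_1!\,a_2!\,G(a_1,a_2,s). \]
   Context: Let $a_1,a_2,s$ be nonnegative integers and $a=a_1+a_2$. $F(a_1,a_2,s)$ is the number of pairs $(X,w)$ where $X\subseteq[a]$ has $|X|=a-s$ (so $F=0$ if $s>a$) and $w=(w_1,\dots,w_a)$ is a sequence listing each element of $X\cup\{a+1,\dots,a+s\}$ exactly once, such that if one rearranges $w_1,\dots,w_{a_1}$ in decreasing order and $w_{a_1+1},\dots,w_a$ in decreasing order, the resulting sequence $u$ satisfies $u_i\ne i$ for all $i\in[a]$. For integers $a_1,a_2,s$, $G(a_1,a_2,s)=\sum_m N_m$, the sum over integers $m$ such that $a_1-m,\ a_2-(s-m),\ m,\ s-m$ are all nonnegative (an empty sum is $0$), where $N_m$ is the number of permutations $\pi$ of $[a]$ that are decreasing within each of four consecutive blocks of positions of lengths $a_1-m,\ a_2-(s-m),\ m,\ s-m$ (in this order; arbitrary between blocks), and have no fixed point ($\pi_i=i$) in the first two blocks. *)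

theory Defs
  imports "HOL-Combinatorics.Permutations"
begin

definition blocksort :: "nat \<Rightarrow> nat list \<Rightarrow> nat list" where
  "blocksort a1 w = rev (sort (take a1 w)) @ rev (sort (drop a1 w))"

text \<open>F(a1,a2,s): number of pairs (X,w). Positions are 1-indexed in the paper;
u_i corresponds to (u ! (i-1)).\<close>
definition F :: "nat \<Rightarrow> nat \<Rightarrow> nat \<Rightarrow> nat" where
  "F a1 a2 s = (let a = a1 + a2 in
     card {(X, w). X \<subseteq> {1..a} \<and> s \<le> a \<and> card X = a - s \<and>
        length w = a \<and> distinct w \<and> set w = X \<union> {a+1..a+s} \<and>
        (\<forall>i\<in>{1..a}. blocksort a1 w ! (i - 1) \<noteq> i)})"

definition same_block :: "nat \<Rightarrow> nat \<Rightarrow> nat \<Rightarrow> nat \<Rightarrow> nat \<Rightarrow> nat \<Rightarrow> bool" where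
  "same_block l1 l2 l3 l4 i j \<longleftrightarrow>
     (i \<in> {1..l1} \<and> j \<in> {1..l1}) \<or>
     (i \<in> {l1+1..l1+l2} \<and> j \<in> {l1+1..l1+l2}) \<or>
     (i \<in> {l1+l2+1..l1+l2+l3} \<and> j \<in> {l1+l2+1..l1+l2+l3}) \<or>
     (i \<in> {l1+l2+l3+1..l1+l2+l3+l4} \<and> j \<in> {l1+l2+l3+1..l1+l2+l3+l4})"

definition Ncount :: "nat \<Rightarrow> nat \<Rightarrow> nat \<Rightarrow> nat \<Rightarrow> nat" where
  "Ncount l1 l2 l3 l4 = (let a = l1 + l2 + l3 + l4 in
     card {\<pi>. \<pi> permutes {1..a} \<and>
        (\<forall>i\<in>{1..a}. \<forall>j\<in>{1..a}. i < j \<and> same_block l1 l2 l3 l4 i j \<longrightarrow> \<pi> i > \<pi> j) \<and>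
        (\<forall>i\<in>{1..l1+l2}. \<pi> i \<noteq> i)})"

definition G :: "nat \<Rightarrow> nat \<Rightarrow> nat \<Rightarrow> nat" where
  "G a1 a2 s = (\<Sum>m\<in>{m. m \<le> s \<and> m \<le> a1 \<and> s - m \<le> a2}.
                   Ncount (a1 - m) (a2 - (s - m)) m (s - m))"

end

theory Submission
  imports Defs "HOL-Combinatorics.Multiset_Permutations"
begin

definition rl :: "nat set \<Rightarrow> nat list" where
  "rl S = rev (sorted_list_of_set S)"

lemma rl_basic:
  assumes "finite S"
  shows "length (rl S) = card S" "set (rl S) = S" "distinct (rl S)"
  using assms by (auto simp: rl_def)

lemma rl_dec:
  assumes "finite S" "i < j" "j < card S"
  shows "rl S ! j < rl S ! i"
proof -
  let ?L = "sorted_list_of_set S"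
  have L: "length ?L = card S" "sorted_wrt (<) ?L" using assms(1)
    by (auto simp: strict_sorted_list_of_set)
  have "?L ! (card S - 1 - j) < ?L ! (card S - 1 - i)"
    using L assms by (auto simp: sorted_wrt_iff_nth_less)
  then show ?thesis using assms L by (simp add: rl_def rev_nth)
qed

lemma rl_count:
  assumes "finite S" "j < card S"
  shows "card {x\<in>S. rl S ! j < x} = j"
proof -
  have "{x\<in>S. rl S ! j < x} = (\<lambda>i. rl S ! i) ` {..<j}"
  proof
    show "{x\<in>S. rl S ! j < x} \<subseteq> (\<lambda>i. rl S ! i) ` {..<j}"
    proof
      fix x assume x: "x \<in> {x\<in>S. rl S ! j < x}"
      then obtain i where i: "i < card S" "x = rl S ! i"
        using rl_basic[OF assms(1)] by (metis (no_types, lifting) in_set_conv_nth mem_Collect_eq)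
      have "i < j"
      proof (rule ccontr)
        assume "\<not> i < j"
        then have "i = j \<or> j < i" by auto
        then show False using rl_dec[OF assms(1), of j i] i x by auto
      qed
      then show "x \<in> (\<lambda>i. rl S ! i) ` {..<j}" using i by auto
    qed
    show "(\<lambda>i. rl S ! i) ` {..<j} \<subseteq> {x\<in>S. rl S ! j < x}"
      using rl_dec[OF assms(1)] assms rl_basic[OF assms(1)] by (auto intro: nth_mem)
  qed
  moreover have "inj_on (\<lambda>i. rl S ! i) {..<j}"
    using rl_basic[OF assms(1)] assms by (auto simp: inj_on_def nth_eq_iff_index_eq)
  ultimately show ?thesis by (simp add: card_image)
qed

definition good :: "int \<Rightarrow> nat set \<Rightarrow> bool" where
  "good c X \<longleftrightarrow> (\<forall>v\<in>X. int v \<noteq> c + 1 + int (card {x\<in>X. v < x}))"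

lemma good_rl:
  assumes "finite S"
  shows "good (int c) S \<longleftrightarrow> (\<forall>j<card S. rl S ! j \<noteq> c + 1 + j)"
proof
  assume g: "good (int c) S"
  show "\<forall>j<card S. rl S ! j \<noteq> c + 1 + j"
  proof (intro allI impI)
    fix j assume j: "j < card S"
    have "rl S ! j \<in> S" using rl_basic[OF assms] j by (metis nth_mem)
    then show "rl S ! j \<noteq> c + 1 + j" using g rl_count[OF assms j] unfolding good_def by force
  qed
next
  assume h: "\<forall>j<card S. rl S ! j \<noteq> c + 1 + j"
  show "good (int c) S" unfolding good_def
  proof
    fix v assume v: "v \<in> S"
    then obtain j where j: "j < card S" "v = rl S ! j"
      using rl_basic[OF assms] by (metis in_set_conv_nth)
    then show "int v \<noteq> int c + 1 + int (card {x\<in>S. v < x})"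
      using h rl_count[OF assms j(1)] by auto
  qed
qed

lemma rl_fun:
  assumes dec: "\<And>i j. c < i \<Longrightarrow> i < j \<Longrightarrow> j \<le> c + k \<Longrightarrow> f j < f i"
    and j: "j < k"
  shows "rl (f ` {c+1..c+k}) ! j = f (c+1+j)"
proof -
  let ?xs = "map f (rev [c+1..<c+k+1])"
  have sw: "sorted_wrt (<) ?xs"
    unfolding sorted_wrt_map sorted_wrt_rev
    by (auto simp: sorted_wrt_iff_nth_less nth_upt simp del: upt_Suc intro!: dec)
  have inj: "inj_on f {c+1..c+k}"
    by (rule inj_onI) (metis atLeastAtMost_iff dec linorder_neqE_nat order.strict_iff_not Suc_eq_plus1 Suc_le_eq)
  have st: "set ?xs = f ` {c+1..c+k}"
  proof -
    have "set (rev [c+1..<c+k+1]) = {c+1..c+k}" by auto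
    then show ?thesis by (simp only: set_map)
  qed
  have ln: "length ?xs = card (f ` {c+1..c+k})"
    using inj by (simp add: card_image)
  have "sorted_list_of_set (f ` {c+1..c+k}) = ?xs"
    using sw st ln sorted_list_of_set_unique[of "f ` {c+1..c+k}" ?xs] by auto
  then have "rl (f ` {c+1..c+k}) = map f [c+1..<c+k+1]"
    by (simp only: rl_def rev_map rev_rev_ident)
  then show ?thesis using j by (simp add: nth_upt del: upt_Suc)
qed

definition Tset :: "nat \<Rightarrow> nat \<Rightarrow> nat \<Rightarrow> int \<Rightarrow> int \<Rightarrow> (nat set \<times> nat set) set" where
  "Tset n k1 k2 c1 c2 = {(X1,X2). X1 \<subseteq> {1..n} \<and> X2 \<subseteq> {1..n} \<and> X1 \<inter> X2 = {} \<and>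
      card X1 = k1 \<and> card X2 = k2 \<and> good c1 X1 \<and> good c2 X2}"

definition T :: "nat \<Rightarrow> nat \<Rightarrow> nat \<Rightarrow> int \<Rightarrow> int \<Rightarrow> nat" where
  "T n k1 k2 c1 c2 = card (Tset n k1 k2 c1 c2)"

lemma finite_Tset: "finite (Tset n k1 k2 c1 c2)"
proof -
  have "Tset n k1 k2 c1 c2 \<subseteq> Pow {1..n} \<times> Pow {1..n}" by (auto simp: Tset_def)
  then show ?thesis by (rule finite_subset) auto
qed

lemma good_remove_max:
  assumes "X \<subseteq> {1..Suc n}" "Suc n \<in> X"
  shows "good c X \<longleftrightarrow> int (Suc n) \<noteq> c + 1 \<and> good (c+1) (X - {Suc n})"
proof -
  have fin: "finite X" using assms(1) finite_subset by blast
  have top: "{x\<in>X. Suc n < x} = {}" using assms(1) by auto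
  have other: "card {x\<in>X. v < x} = Suc (card {x\<in>X - {Suc n}. v < x})" if "v \<in> X - {Suc n}" for v
  proof -
    have "v < Suc n" using that assms(1) by auto
    then have "{x\<in>X. v < x} = insert (Suc n) {x\<in>X - {Suc n}. v < x}" using assms(2) by auto
    then show ?thesis using fin by simp
  qed
  have eq1: "(\<forall>v\<in>X. int v \<noteq> c + 1 + int (card {x\<in>X. v < x})) \<longleftrightarrow>
      int (Suc n) \<noteq> c + 1 + int (card {x\<in>X. Suc n < x}) \<and>
      (\<forall>v\<in>X - {Suc n}. int v \<noteq> c + 1 + int (card {x\<in>X. v < x}))"
    using assms(2) by blast
  have eq2: "(\<forall>v\<in>X - {Suc n}. int v \<noteq> c + 1 + int (card {x\<in>X. v < x})) \<longleftrightarrow>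
     (\<forall>v\<in>X - {Suc n}. int v \<noteq> (c + 1) + 1 + int (card {x\<in>X - {Suc n}. v < x}))"
    by (rule ball_cong[OF refl], subst other, assumption, simp add: algebra_simps)
  show ?thesis
    unfolding good_def eq1 eq2 top by simp
qed

lemma good_big:
  assumes "X \<subseteq> {1..n}" "int n \<le> c"
  shows "good c X"
  using assms unfolding good_def by force

lemma Tset_big:
  assumes "int n \<le> c2" "int n \<le> c2'"
  shows "T n k1 k2 c1 c2 = T n k1 k2 c1 c2'"
proof -
  have "Tset n k1 k2 c1 c2 = Tset n k1 k2 c1 c2'"
    using good_big assms unfolding Tset_def by blast
  then show ?thesis by (simp add: T_def)
qed

lemma T_swap: "T n k1 k2 c1 c2 = T n k2 k1 c2 c1"
proof -
  have "Tset n k2 k1 c2 c1 = prod.swap ` Tset n k1 k2 c1 c2"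
    unfolding Tset_def by auto
  then show ?thesis unfolding T_def by (simp add: card_image)
qed

lemma T_top:
  "T (Suc n) k1 k2 c1 c2 = T n k1 k2 c1 c2
     + (if 0 < k1 \<and> int (Suc n) \<noteq> c1 + 1 then T n (k1-1) k2 (c1+1) c2 else 0)
     + (if 0 < k2 \<and> int (Suc n) \<noteq> c2 + 1 then T n k1 (k2-1) c1 (c2+1) else 0)"
proof -
  let ?N = "Suc n"
  let ?S = "Tset (Suc n) k1 k2 c1 c2"
  define A0 where "A0 = {p\<in>?S. ?N \<notin> fst p \<and> ?N \<notin> snd p}"
  define A1 where "A1 = {p\<in>?S. ?N \<in> fst p}"
  define A2 where "A2 = {p\<in>?S. ?N \<in> snd p}"
  have split: "?S = A0 \<union> A1 \<union> A2" unfolding A0_def A1_def A2_def by auto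
  have fin: "finite A0" "finite A1" "finite A2"
    unfolding A0_def A1_def A2_def using finite_Tset by auto
  have disj: "A0 \<inter> A1 = {}" "(A0 \<union> A1) \<inter> A2 = {}"
    unfolding A0_def A1_def A2_def Tset_def by auto
  have c0: "card A0 = T n k1 k2 c1 c2"
  proof -
    have "A0 = Tset n k1 k2 c1 c2"
      unfolding A0_def Tset_def by (auto simp: subset_iff le_Suc_eq)
    then show ?thesis by (simp add: T_def)
  qed
  have c1: "card A1 = (if 0 < k1 \<and> int (Suc n) \<noteq> c1 + 1 then T n (k1-1) k2 (c1+1) c2 else 0)"
  proof (cases "0 < k1 \<and> int (Suc n) \<noteq> c1 + 1")
    case True
    let ?f = "\<lambda>(X1::nat set, X2::nat set). (insert ?N X1, X2)"
    have "A1 = ?f ` Tset n (k1-1) k2 (c1+1) c2"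
    proof
      show "A1 \<subseteq> ?f ` Tset n (k1-1) k2 (c1+1) c2"
      proof
        fix p assume p: "p \<in> A1"
        obtain X1 X2 where pe: "p = (X1,X2)" by (cases p)
        have h: "X1 \<subseteq> {1..?N}" "X2 \<subseteq> {1..?N}" "X1 \<inter> X2 = {}" "card X1 = k1" "card X2 = k2"
          "good c1 X1" "good c2 X2" "?N \<in> X1"
          using p pe unfolding A1_def Tset_def by auto
        have fin1: "finite X1" using h(1) finite_subset by blast
        have "X1 - {?N} \<subseteq> {1..n}" using h(1) by (auto simp: subset_iff le_Suc_eq)
        moreover have "X2 \<subseteq> {1..n}" using h(1-3,8) by (auto simp: subset_iff le_Suc_eq)
        moreover have "card (X1 - {?N}) = k1 - 1" using h fin1 by simp
        moreover have "good (c1+1) (X1 - {?N})" using good_remove_max[OF h(1) h(8)] h(6) by simp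
        ultimately have "(X1 - {?N}, X2) \<in> Tset n (k1-1) k2 (c1+1) c2"
          using h unfolding Tset_def by auto
        moreover have "p = ?f (X1 - {?N}, X2)" using pe h(8) by auto
        ultimately show "p \<in> ?f ` Tset n (k1-1) k2 (c1+1) c2" by blast
      qed
      show "?f ` Tset n (k1-1) k2 (c1+1) c2 \<subseteq> A1"
      proof
        fix p assume "p \<in> ?f ` Tset n (k1-1) k2 (c1+1) c2"
        then obtain X1 X2 where q: "(X1,X2) \<in> Tset n (k1-1) k2 (c1+1) c2" and pe: "p = (insert ?N X1, X2)"
          by auto
        have h: "X1 \<subseteq> {1..n}" "X2 \<subseteq> {1..n}" "X1 \<inter> X2 = {}" "card X1 = k1 - 1" "card X2 = k2"
          "good (c1+1) X1" "good c2 X2" using q unfolding Tset_def by auto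
        have fin1: "finite X1" using h(1) finite_subset by blast
        have nn: "?N \<notin> X1" using h(1) by auto
        have s1: "insert ?N X1 \<subseteq> {1..?N}" using h(1) by auto
        have "insert ?N X1 - {?N} = X1" using nn by auto
        then have "good c1 (insert ?N X1)" using good_remove_max[OF s1] True h(6) by simp
        moreover have "card (insert ?N X1) = k1" using fin1 nn h(4) True by simp
        moreover have "insert ?N X1 \<inter> X2 = {}" using h(2,3) by auto
        ultimately show "p \<in> A1" using pe h s1 unfolding A1_def Tset_def by auto
      qed
    qed
    moreover have "inj_on ?f (Tset n (k1-1) k2 (c1+1) c2)"
    proof (rule inj_onI)
      fix p q assume p: "p \<in> Tset n (k1-1) k2 (c1+1) c2" and q: "q \<in> Tset n (k1-1) k2 (c1+1) c2"
        and e: "?f p = ?f q"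
      obtain A B where pe: "p = (A,B)" by (cases p)
      obtain A' B' where qe: "q = (A',B')" by (cases q)
      have "?N \<notin> A" "?N \<notin> A'" using p q pe qe unfolding Tset_def by auto
      moreover have "insert ?N A = insert ?N A'" "B = B'" using e pe qe by auto
      ultimately show "p = q" using pe qe by (metis Diff_insert_absorb)
    qed
    ultimately show ?thesis using True by (simp add: card_image T_def)
  next
    case False
    have "A1 = {}"
    proof (rule ccontr)
      assume "A1 \<noteq> {}"
      then obtain X1 X2 where p: "(X1,X2) \<in> A1" by auto
      have h: "X1 \<subseteq> {1..?N}" "card X1 = k1" "good c1 X1" "?N \<in> X1"
        using p unfolding A1_def Tset_def by auto
      have "finite X1" using h(1) finite_subset by blast
      then have "0 < k1" using h by (auto simp: card_gt_0_iff)
      moreover have "int ?N \<noteq> c1 + 1" using good_remove_max[OF h(1) h(4)] h(3) by simp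
      ultimately show False using False by simp
    qed
    then show ?thesis using False by auto
  qed
  have c2: "card A2 = (if 0 < k2 \<and> int (Suc n) \<noteq> c2 + 1 then T n k1 (k2-1) c1 (c2+1) else 0)"
  proof (cases "0 < k2 \<and> int (Suc n) \<noteq> c2 + 1")
    case True
    let ?f = "\<lambda>(X1::nat set, X2::nat set). (X1, insert ?N X2)"
    have "A2 = ?f ` Tset n k1 (k2-1) c1 (c2+1)"
    proof
      show "A2 \<subseteq> ?f ` Tset n k1 (k2-1) c1 (c2+1)"
      proof
        fix p assume p: "p \<in> A2"
        obtain X1 X2 where pe: "p = (X1,X2)" by (cases p)
        have h: "X1 \<subseteq> {1..?N}" "X2 \<subseteq> {1..?N}" "X1 \<inter> X2 = {}" "card X1 = k1" "card X2 = k2"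
          "good c1 X1" "good c2 X2" "?N \<in> X2"
          using p pe unfolding A2_def Tset_def by auto
        have fin2: "finite X2" using h(2) finite_subset by blast
        have "X2 - {?N} \<subseteq> {1..n}" using h(2) by (auto simp: subset_iff le_Suc_eq)
        moreover have "X1 \<subseteq> {1..n}" using h(1-3,8) by (auto simp: subset_iff le_Suc_eq)
        moreover have "card (X2 - {?N}) = k2 - 1" using h fin2 by simp
        moreover have "good (c2+1) (X2 - {?N})" using good_remove_max[OF h(2) h(8)] h(7) by simp
        ultimately have "(X1, X2 - {?N}) \<in> Tset n k1 (k2-1) c1 (c2+1)"
          using h unfolding Tset_def by auto
        moreover have "p = ?f (X1, X2 - {?N})" using pe h(8) by auto
        ultimately show "p \<in> ?f ` Tset n k1 (k2-1) c1 (c2+1)" by blast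
      qed
      show "?f ` Tset n k1 (k2-1) c1 (c2+1) \<subseteq> A2"
      proof
        fix p assume "p \<in> ?f ` Tset n k1 (k2-1) c1 (c2+1)"
        then obtain X1 X2 where q: "(X1,X2) \<in> Tset n k1 (k2-1) c1 (c2+1)" and pe: "p = (X1, insert ?N X2)"
          by auto
        have h: "X1 \<subseteq> {1..n}" "X2 \<subseteq> {1..n}" "X1 \<inter> X2 = {}" "card X1 = k1" "card X2 = k2 - 1"
          "good c1 X1" "good (c2+1) X2" using q unfolding Tset_def by auto
        have fin2: "finite X2" using h(2) finite_subset by blast
        have nn: "?N \<notin> X2" using h(2) by auto
        have s2: "insert ?N X2 \<subseteq> {1..?N}" using h(2) by auto
        have "insert ?N X2 - {?N} = X2" using nn by auto
        then have "good c2 (insert ?N X2)" using good_remove_max[OF s2] True h(7) by simp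
        moreover have "card (insert ?N X2) = k2" using fin2 nn h(5) True by simp
        moreover have "X1 \<inter> insert ?N X2 = {}" using h(1,3) by auto
        ultimately show "p \<in> A2" using pe h s2 unfolding A2_def Tset_def by auto
      qed
    qed
    moreover have "inj_on ?f (Tset n k1 (k2-1) c1 (c2+1))"
    proof (rule inj_onI)
      fix p q assume p: "p \<in> Tset n k1 (k2-1) c1 (c2+1)" and q: "q \<in> Tset n k1 (k2-1) c1 (c2+1)"
        and e: "?f p = ?f q"
      obtain A B where pe: "p = (A,B)" by (cases p)
      obtain A' B' where qe: "q = (A',B')" by (cases q)
      have "?N \<notin> B" "?N \<notin> B'" using p q pe qe unfolding Tset_def by auto
      moreover have "insert ?N B = insert ?N B'" "A = A'" using e pe qe by auto
      ultimately show "p = q" using pe qe by (metis Diff_insert_absorb)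
    qed
    ultimately show ?thesis using True by (simp add: card_image T_def)
  next
    case False
    have "A2 = {}"
    proof (rule ccontr)
      assume "A2 \<noteq> {}"
      then obtain X1 X2 where p: "(X1,X2) \<in> A2" by auto
      have h: "X2 \<subseteq> {1..?N}" "card X2 = k2" "good c2 X2" "?N \<in> X2"
        using p unfolding A2_def Tset_def by auto
      have "finite X2" using h(1) finite_subset by blast
      then have "0 < k2" using h by (auto simp: card_gt_0_iff)
      moreover have "int ?N \<noteq> c2 + 1" using good_remove_max[OF h(1) h(4)] h(3) by simp
      ultimately show False using False by simp
    qed
    then show ?thesis using False by auto
  qed
  have "card ?S = card A0 + card A1 + card A2"
    using split fin disj by (simp add: card_Un_disjoint)
  then show ?thesis using c0 c1 c2 by (simp add: T_def)
qed

lemma card_less_greater: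
  fixes X :: "nat set"
  assumes "finite X" "v \<in> X"
  shows "card {x\<in>X. x < v} + card {x\<in>X. v < x} + 1 = card X"
proof -
  have "X = {x\<in>X. x < v} \<union> {x\<in>X. v < x} \<union> {v}" using assms by auto
  moreover have "finite {x\<in>X. x < v}" "finite {x\<in>X. v < x}" using assms by auto
  ultimately have "card X = card ({x\<in>X. x < v} \<union> {x\<in>X. v < x} \<union> {v})" by simp
  also have "\<dots> = card {x\<in>X. x < v} + card {x\<in>X. v < x} + 1"
  proof -
    have "card ({x\<in>X. x < v} \<union> {x\<in>X. v < x}) = card {x\<in>X. x < v} + card {x\<in>X. v < x}"
      by (rule card_Un_disjoint) (use assms in auto)
    moreover have "card ({x\<in>X. x < v} \<union> {x\<in>X. v < x} \<union> {v}) = card ({x\<in>X. x < v} \<union> {x\<in>X. v < x}) + card {v}"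
      by (rule card_Un_disjoint) (use assms in auto)
    ultimately show ?thesis by simp
  qed
  finally show ?thesis by simp
qed

definition rf :: "nat \<Rightarrow> nat set \<Rightarrow> nat set" where
  "rf n X = (\<lambda>v. Suc n - v) ` X"

lemma rf_inj: "inj_on (\<lambda>v. Suc n - v) {1..n}"
  by (rule inj_onI) auto

lemma rf_sub: "X \<subseteq> {1..n} \<Longrightarrow> rf n X \<subseteq> {1..n}"
  unfolding rf_def by (auto simp: subset_iff)

lemma rf_rf: "X \<subseteq> {1..n} \<Longrightarrow> rf n (rf n X) = X"
  unfolding rf_def image_image
proof -
  assume "X \<subseteq> {1..n}"
  then have "\<forall>v\<in>X. Suc n - (Suc n - v) = v" by auto
  then show "(\<lambda>x. Suc n - (Suc n - x)) ` X = X" by simp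
qed

lemma rf_card: "X \<subseteq> {1..n} \<Longrightarrow> card (rf n X) = card X"
  unfolding rf_def by (rule card_image) (rule inj_on_subset[OF rf_inj])

lemma rf_disj: "X \<subseteq> {1..n} \<Longrightarrow> Y \<subseteq> {1..n} \<Longrightarrow> X \<inter> Y = {} \<Longrightarrow> rf n X \<inter> rf n Y = {}"
  unfolding rf_def by (simp add: inj_on_image_Int[OF rf_inj, symmetric])

lemma good_rf:
  assumes X: "X \<subseteq> {1..n}"
  shows "good c X \<longleftrightarrow> good (int n - int (card X) - c) (rf n X)"
proof -
  have fin: "finite X" using X finite_subset by blast
  have cnt: "card {x\<in>rf n X. Suc n - v < x} = card {x\<in>X. x < v}" if v: "v \<in> X" for v
  proof -
    have "{x\<in>rf n X. Suc n - v < x} = (\<lambda>v. Suc n - v) ` {x\<in>X. x < v}"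
      using X v unfolding rf_def by auto
    moreover have "inj_on (\<lambda>v. Suc n - v) {x\<in>X. x < v}"
      by (rule inj_on_subset[OF rf_inj]) (use X in auto)
    ultimately show ?thesis by (simp add: card_image)
  qed
  have "good (int n - int (card X) - c) (rf n X) \<longleftrightarrow>
     (\<forall>v\<in>X. int (Suc n - v) \<noteq> int n - int (card X) - c + 1 + int (card {x\<in>rf n X. Suc n - v < x}))"
    unfolding good_def rf_def by simp
  also have "\<dots> \<longleftrightarrow> (\<forall>v\<in>X. int v \<noteq> c + 1 + int (card {x\<in>X. v < x}))"
  proof (rule ball_cong[OF refl])
    fix v assume v: "v \<in> X"
    have a: "int (card {x\<in>X. x < v}) = int (card X) - 1 - int (card {x\<in>X. v < x})"
      using card_less_greater[OF fin v] by linarith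
    have b: "int (Suc n - v) = int n + 1 - int v" using v X by auto
    show "(int (Suc n - v) \<noteq> int n - int (card X) - c + 1 + int (card {x\<in>rf n X. Suc n - v < x})) =
         (int v \<noteq> c + 1 + int (card {x\<in>X. v < x}))"
      unfolding cnt[OF v] a b by linarith
  qed
  also have "\<dots> \<longleftrightarrow> good c X" by (simp only: good_def)
  finally show ?thesis by blast
qed

lemma card_by_inverse:
  assumes "\<And>x. x \<in> A \<Longrightarrow> f x \<in> B" "\<And>y. y \<in> B \<Longrightarrow> g y \<in> A"
    "\<And>x. x \<in> A \<Longrightarrow> g (f x) = x" "\<And>y. y \<in> B \<Longrightarrow> f (g y) = y"
  shows "card A = card B"
proof -
  have "bij_betw f A B" using assms by (intro bij_betw_byWitness[where f'=g]) auto
  then show ?thesis by (rule bij_betw_same_card)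
qed

definition rf2 :: "nat \<Rightarrow> nat set \<times> nat set \<Rightarrow> nat set \<times> nat set" where
  "rf2 n p = (rf n (fst p), rf n (snd p))"

lemma rf2_mem:
  assumes "p \<in> Tset n k1 k2 c1 c2"
  shows "rf2 n p \<in> Tset n k1 k2 (int n - int k1 - c1) (int n - int k2 - c2)"
proof -
  obtain X1 X2 where pe: "p = (X1,X2)" by (cases p)
  have h: "X1 \<subseteq> {1..n}" "X2 \<subseteq> {1..n}" "X1 \<inter> X2 = {}" "card X1 = k1" "card X2 = k2"
        "good c1 X1" "good c2 X2" using assms pe unfolding Tset_def by auto
  have "good (int n - int k1 - c1) (rf n X1)" using good_rf[OF h(1), of c1] h by simp
  moreover have "good (int n - int k2 - c2) (rf n X2)" using good_rf[OF h(2), of c2] h by simp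
  moreover have "rf n X1 \<subseteq> {1..n}" "rf n X2 \<subseteq> {1..n}" "rf n X1 \<inter> rf n X2 = {}"
    "card (rf n X1) = k1" "card (rf n X2) = k2"
    using rf_sub[OF h(1)] rf_sub[OF h(2)] rf_disj[OF h(1-3)] rf_card[OF h(1)] rf_card[OF h(2)] h(4,5)
    by auto
  ultimately show ?thesis using pe unfolding Tset_def rf2_def by simp
qed

lemma rf2_rf2:
  assumes "p \<in> Tset n k1 k2 c1 c2"
  shows "rf2 n (rf2 n p) = p"
proof -
  obtain X1 X2 where pe: "p = (X1,X2)" by (cases p)
  have h: "X1 \<subseteq> {1..n}" "X2 \<subseteq> {1..n}" using assms pe unfolding Tset_def by auto
  show ?thesis using pe rf_rf[OF h(1)] rf_rf[OF h(2)] by (simp add: rf2_def)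
qed

lemma T_refl: "T n k1 k2 c1 c2 = T n k1 k2 (int n - int k1 - c1) (int n - int k2 - c2)"
  unfolding T_def
proof (rule card_by_inverse[where f="rf2 n" and g="rf2 n"])
  fix x assume "x \<in> Tset n k1 k2 c1 c2"
  then show "rf2 n x \<in> Tset n k1 k2 (int n - int k1 - c1) (int n - int k2 - c2)" by (rule rf2_mem)
next
  fix y assume y: "y \<in> Tset n k1 k2 (int n - int k1 - c1) (int n - int k2 - c2)"
  have "rf2 n y \<in> Tset n k1 k2 (int n - int k1 - (int n - int k1 - c1)) (int n - int k2 - (int n - int k2 - c2))"
    by (rule rf2_mem[OF y])
  then show "rf2 n y \<in> Tset n k1 k2 c1 c2" by simp
qed (auto intro: rf2_rf2)

lemma T_bot:
  "T (Suc n) k1 k2 c1 c2 = T n k1 k2 (c1-1) (c2-1)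
     + (if 0 < k1 \<and> c1 + int k1 \<noteq> 1 then T n (k1-1) k2 (c1-1) (c2-1) else 0)
     + (if 0 < k2 \<and> c2 + int k2 \<noteq> 1 then T n k1 (k2-1) (c1-1) (c2-1) else 0)"
proof -
  define d1 where "d1 = int (Suc n) - int k1 - c1"
  define d2 where "d2 = int (Suc n) - int k2 - c2"
  have "T (Suc n) k1 k2 c1 c2 = T (Suc n) k1 k2 d1 d2" unfolding d1_def d2_def by (rule T_refl)
  also have "\<dots> = T n k1 k2 d1 d2
     + (if 0 < k1 \<and> int (Suc n) \<noteq> d1 + 1 then T n (k1-1) k2 (d1+1) d2 else 0)
     + (if 0 < k2 \<and> int (Suc n) \<noteq> d2 + 1 then T n k1 (k2-1) d1 (d2+1) else 0)"
    by (rule T_top)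
  also have "T n k1 k2 d1 d2 = T n k1 k2 (c1-1) (c2-1)"
    using T_refl[of n k1 k2 d1 d2] by (simp add: d1_def d2_def)
  also have "(if 0 < k1 \<and> int (Suc n) \<noteq> d1 + 1 then T n (k1-1) k2 (d1+1) d2 else 0)
      = (if 0 < k1 \<and> c1 + int k1 \<noteq> 1 then T n (k1-1) k2 (c1-1) (c2-1) else 0)"
  proof (cases "0 < k1")
    case True
    have "T n (k1-1) k2 (d1+1) d2 = T n (k1-1) k2 (c1-1) (c2-1)"
      using T_refl[of n "k1-1" k2 "d1+1" d2] True by (simp add: d1_def d2_def of_nat_diff)
    moreover have "(int (Suc n) \<noteq> d1 + 1) = (c1 + int k1 \<noteq> 1)" by (auto simp: d1_def)
    ultimately show ?thesis by simp
  qed simp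
  also have "(if 0 < k2 \<and> int (Suc n) \<noteq> d2 + 1 then T n k1 (k2-1) d1 (d2+1) else 0)
      = (if 0 < k2 \<and> c2 + int k2 \<noteq> 1 then T n k1 (k2-1) (c1-1) (c2-1) else 0)"
  proof (cases "0 < k2")
    case True
    have "T n k1 (k2-1) d1 (d2+1) = T n k1 (k2-1) (c1-1) (c2-1)"
      using T_refl[of n k1 "k2-1" d1 "d2+1"] True by (simp add: d1_def d2_def of_nat_diff)
    moreover have "(int (Suc n) \<noteq> d2 + 1) = (c2 + int k2 \<noteq> 1)" by (auto simp: d2_def)
    ultimately show ?thesis by simp
  qed simp
  finally show ?thesis .
qed

lemma S1:
  "0 \<le> c1 \<Longrightarrow> c1 + int k1 + 1 \<le> c2 \<Longrightarrow> c2 \<le> int n \<Longrightarrow> T n k1 k2 (c1+1) c2 = T n k1 k2 c1 c2"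
proof (induction n arbitrary: k1 k2 c1 c2)
  case 0
  then show ?case by simp
next
  case (Suc n)
  note IH = Suc.IH
  have c1: "0 \<le> c1" and h: "c1 + int k1 + 1 \<le> c2" and c2: "c2 \<le> int (Suc n)" using Suc.prems by auto
  show ?case
  proof (cases "c2 \<le> int n")
    case True
    have z: "T n k1 k2 (c1+1) c2 = T n k1 k2 c1 c2" using IH c1 h True by simp
    have x1: "(if 0 < k1 \<and> int (Suc n) \<noteq> (c1+1) + 1 then T n (k1-1) k2 ((c1+1)+1) c2 else 0)
       = (if 0 < k1 \<and> int (Suc n) \<noteq> c1 + 1 then T n (k1-1) k2 (c1+1) c2 else 0)"
    proof (cases "0 < k1")
      case True
      have "T n (k1-1) k2 ((c1+1)+1) c2 = T n (k1-1) k2 (c1+1) c2"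
        using IH[of "c1+1" "k1-1" c2 k2] c1 h \<open>c2 \<le> int n\<close> True by (simp add: of_nat_diff)
      moreover have "int (Suc n) \<noteq> (c1+1) + 1" "int (Suc n) \<noteq> c1 + 1" using h True \<open>c2 \<le> int n\<close> by auto
      ultimately show ?thesis by simp
    qed auto
    have x2: "(if 0 < k2 \<and> int (Suc n) \<noteq> c2 + 1 then T n k1 (k2-1) (c1+1) (c2+1) else 0)
       = (if 0 < k2 \<and> int (Suc n) \<noteq> c2 + 1 then T n k1 (k2-1) c1 (c2+1) else 0)"
    proof (cases "0 < k2 \<and> int (Suc n) \<noteq> c2 + 1")
      case True
      then have "c2 + 1 \<le> int n" using \<open>c2 \<le> int n\<close> by auto
      then have "T n k1 (k2-1) (c1+1) (c2+1) = T n k1 (k2-1) c1 (c2+1)"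
        using IH c1 h by simp
      then show ?thesis by simp
    qed auto
    show ?thesis unfolding T_top z x1 x2 by simp
  next
    case False
    then have c2e: "c2 = int (Suc n)" using c2 by simp
    have big: "T n a b x (int (Suc n)) = T n a b x (int n)"
      "T n a b x (int (Suc n) + 1) = T n a b x (int n)" for a b x
      by (rule Tset_big; simp)+
    show ?thesis
    proof (cases "c1 + int k1 + 1 \<le> int n")
      case True
      have z: "T n k1 k2 (c1+1) c2 = T n k1 k2 c1 c2"
        unfolding c2e big using IH c1 True by simp
      have x1: "(if 0 < k1 \<and> int (Suc n) \<noteq> (c1+1) + 1 then T n (k1-1) k2 ((c1+1)+1) c2 else 0)
         = (if 0 < k1 \<and> int (Suc n) \<noteq> c1 + 1 then T n (k1-1) k2 (c1+1) c2 else 0)"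
      proof (cases "0 < k1")
        case True
        have "T n (k1-1) k2 ((c1+1)+1) c2 = T n (k1-1) k2 (c1+1) c2"
          unfolding c2e big
          using IH[of "c1+1" "k1-1" "int n" k2] c1 \<open>c1 + int k1 + 1 \<le> int n\<close> True by (simp add: of_nat_diff)
        moreover have "int (Suc n) \<noteq> (c1+1) + 1" "int (Suc n) \<noteq> c1 + 1"
          using \<open>c1 + int k1 + 1 \<le> int n\<close> True by auto
        ultimately show ?thesis by simp
      qed auto
      have x2: "(if 0 < k2 \<and> int (Suc n) \<noteq> c2 + 1 then T n k1 (k2-1) (c1+1) (c2+1) else 0)
         = (if 0 < k2 \<and> int (Suc n) \<noteq> c2 + 1 then T n k1 (k2-1) c1 (c2+1) else 0)"
        unfolding c2e big using IH c1 True by simp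
      show ?thesis unfolding T_top z x1 x2 by simp
    next
      case False
      then have e: "c1 + int k1 = int n" using h c2e by simp
      have lhs: "T (Suc n) k1 k2 (c1+1) c2 = T n k1 k2 c1 (int n)
         + (if 0 < k1 then T n (k1-1) k2 c1 (int n) else 0)
         + (if 0 < k2 then T n k1 (k2-1) c1 (int n) else 0)"
      proof -
        have "T (Suc n) k1 k2 (c1+1) c2 = T n k1 k2 (c1+1-1) (c2-1)
         + (if 0 < k1 \<and> (c1+1) + int k1 \<noteq> 1 then T n (k1-1) k2 (c1+1-1) (c2-1) else 0)
         + (if 0 < k2 \<and> c2 + int k2 \<noteq> 1 then T n k1 (k2-1) (c1+1-1) (c2-1) else 0)"
          by (rule T_bot)
        moreover have "0 < k1 \<Longrightarrow> (c1+1) + int k1 \<noteq> 1" using c1 by auto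
        moreover have "0 < k2 \<Longrightarrow> c2 + int k2 \<noteq> 1" using c2e by auto
        ultimately show ?thesis using c2e by (simp cong: if_cong)
      qed
      have rhs: "T (Suc n) k1 k2 c1 c2 = T n k1 k2 c1 (int n)
         + (if 0 < k1 then T n (k1-1) k2 (c1+1) (int n) else 0)
         + (if 0 < k2 then T n k1 (k2-1) c1 (int n) else 0)"
      proof -
        have "T (Suc n) k1 k2 c1 c2 = T n k1 k2 c1 c2
         + (if 0 < k1 \<and> int (Suc n) \<noteq> c1 + 1 then T n (k1-1) k2 (c1+1) c2 else 0)
         + (if 0 < k2 \<and> int (Suc n) \<noteq> c2 + 1 then T n k1 (k2-1) c1 (c2+1) else 0)"
          by (rule T_top)
        moreover have "0 < k1 \<Longrightarrow> int (Suc n) \<noteq> c1 + 1" using e by auto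
        ultimately show ?thesis unfolding c2e big by (simp cong: if_cong)
      qed
      have "0 < k1 \<Longrightarrow> T n (k1-1) k2 c1 (int n) = T n (k1-1) k2 (c1+1) (int n)"
        using IH[of c1 "k1-1" "int n" k2] c1 e by (simp add: of_nat_diff)
      then show ?thesis unfolding lhs rhs by simp
    qed
  qed
qed

lemma T_shift_nat:
  "int d + int k1 \<le> c2 \<Longrightarrow> c2 \<le> int n \<Longrightarrow> T n k1 k2 (int d) c2 = T n k1 k2 0 c2"
proof (induction d)
  case 0 then show ?case by simp
next
  case (Suc d)
  have "T n k1 k2 (int d + 1) c2 = T n k1 k2 (int d) c2"
    by (rule S1) (use Suc.prems in auto)
  then show ?case using Suc by (simp add: add.commute)
qed

lemma PQ:
  assumes "m \<le> s"
  shows "T (k1+k2+s) k1 k2 (int m) (int (k1+s)) = T (k1+k2+s) k1 k2 0 (int k1)"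
proof -
  let ?a = "k1+k2+s"
  have "T ?a k1 k2 (int m) (int (k1+s)) = T ?a k1 k2 0 (int (k1+s))"
    by (rule T_shift_nat) (use assms in auto)
  also have "\<dots> = T ?a k2 k1 (int (k1+s)) 0" by (rule T_swap)
  also have "\<dots> = T ?a k2 k1 0 (int (k2+s))"
    using T_refl[of ?a k2 k1 "int (k1+s)" 0] by simp
  also have "\<dots> = T ?a k2 k1 (int s) (int (k2+s))"
    by (rule T_shift_nat[symmetric]) auto
  also have "\<dots> = T ?a k2 k1 (int k1) 0"
    using T_refl[of ?a k2 k1 "int s" "int (k2+s)"] by simp
  also have "\<dots> = T ?a k1 k2 0 (int k1)" by (rule T_swap)
  finally show ?thesis .
qed

lemma rl_img:
  assumes "finite S" "card S = k"
  shows "(\<lambda>i. rl S ! (i - c - 1)) ` {c+1..c+k} = S"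
proof -
  have "(\<lambda>i. rl S ! (i - c - 1)) ` {c+1..c+k} = (\<lambda>j. rl S ! j) ` {..<k}"
  proof (rule set_eqI, rule iffI)
    fix x assume "x \<in> (\<lambda>i. rl S ! (i - c - 1)) ` {c+1..c+k}"
    then obtain i where "i \<in> {c+1..c+k}" "x = rl S ! (i - c - 1)" by auto
    then show "x \<in> (\<lambda>j. rl S ! j) ` {..<k}" by (intro image_eqI[of _ _ "i-c-1"]) auto
  next
    fix x assume "x \<in> (\<lambda>j. rl S ! j) ` {..<k}"
    then obtain j where "j < k" "x = rl S ! j" by auto
    then show "x \<in> (\<lambda>i. rl S ! (i - c - 1)) ` {c+1..c+k}" by (intro image_eqI[of _ _ "j+c+1"]) auto
  qed
  also have "\<dots> = set (rl S)"
    using nth_image[of k "rl S"] rl_basic[OF assms(1)] assms(2) by (simp add: lessThan_atLeast0)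
  also have "\<dots> = S" using rl_basic[OF assms(1)] by simp
  finally show ?thesis .
qed

lemma rl_blk_dec:
  assumes "finite S" "card S = k" "c < i" "i < j" "j \<le> c + k"
  shows "rl S ! (j - c - 1) < rl S ! (i - c - 1)"
  using rl_dec[OF assms(1), of "i-c-1" "j-c-1"] assms by auto

lemma dec_blk:
  fixes c k :: nat and f :: "nat \<Rightarrow> nat"
  assumes dec: "\<And>i j. c < i \<Longrightarrow> i < j \<Longrightarrow> j \<le> c + k \<Longrightarrow> f j < f i"
    and i: "i \<in> {c+1..c+k}"
  shows "f i = rl (f ` {c+1..c+k}) ! (i - c - 1)"
  using rl_fun[of c k f "i-c-1", OF dec] i by auto

lemma dec_inj:
  fixes c k :: nat and f :: "nat \<Rightarrow> nat"
  assumes dec: "\<And>i j. c < i \<Longrightarrow> i < j \<Longrightarrow> j \<le> c + k \<Longrightarrow> f j < f i"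
  shows "inj_on f {c+1..c+k}"
proof (rule inj_onI)
  fix x y assume x: "x \<in> {c+1..c+k}" and y: "y \<in> {c+1..c+k}" and e: "f x = f y"
  show "x = y"
  proof (rule ccontr)
    assume "x \<noteq> y"
    then have "x < y \<or> y < x" by (rule nat_neq_iff[THEN iffD1])
    then show False using dec[of x y] dec[of y x] x y e by auto
  qed
qed

lemma dec_card:
  fixes c k :: nat and f :: "nat \<Rightarrow> nat"
  assumes dec: "\<And>i j. c < i \<Longrightarrow> i < j \<Longrightarrow> j \<le> c + k \<Longrightarrow> f j < f i"
  shows "card (f ` {c+1..c+k}) = k"
  using card_image[OF dec_inj[of c k f, OF dec]] by simp

lemma dec_good:
  fixes c k :: nat and f :: "nat \<Rightarrow> nat"
  assumes dec: "\<And>i j. c < i \<Longrightarrow> i < j \<Longrightarrow> j \<le> c + k \<Longrightarrow> f j < f i"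
    and nf: "\<And>i. i \<in> {c+1..c+k} \<Longrightarrow> f i \<noteq> i"
  shows "good (int c) (f ` {c+1..c+k})"
proof -
  have fin: "finite (f ` {c+1..c+k})" by simp
  have ck: "card (f ` {c+1..c+k}) = k" using dec_card[of c k f, OF dec] .
  have "\<forall>j<card (f ` {c+1..c+k}). rl (f ` {c+1..c+k}) ! j \<noteq> c + 1 + j"
  proof (intro allI impI)
    fix j assume j: "j < card (f ` {c+1..c+k})"
    then have j': "j < k" using ck by simp
    have "rl (f ` {c+1..c+k}) ! j = f (c+1+j)" using rl_fun[of c k f j, OF dec j'] .
    then show "rl (f ` {c+1..c+k}) ! j \<noteq> c + 1 + j" using nf[of "c+1+j"] j' by auto
  qed
  then show ?thesis using good_rl[OF fin, of c] by simp
qed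

lemma good_blk:
  assumes "finite S" "card S = k" "good (int c) S" "i \<in> {c+1..c+k}"
  shows "rl S ! (i - c - 1) \<noteq> i"
proof -
  have "\<forall>j<card S. rl S ! j \<noteq> c + 1 + j" using good_rl[OF assms(1), of c] assms(3) by simp
  moreover have "i - c - 1 < card S" using assms(2,4) by auto
  ultimately have "rl S ! (i - c - 1) \<noteq> c + 1 + (i - c - 1)" by blast
  then show ?thesis using assms(4) by auto
qed

definition psi :: "nat \<Rightarrow> nat \<Rightarrow> nat \<Rightarrow> nat \<Rightarrow> (nat set \<times> nat set) \<times> nat set \<Rightarrow> nat \<Rightarrow> nat" where
  "psi l1 l2 l3 l4 x i = (let A = fst (fst x); B = snd (fst x); C = snd x;
      D = {1..l1+l2+l3+l4} - (A \<union> B \<union> C) in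
     if i \<in> {0+1..0+l1} then rl A ! (i - 0 - 1)
     else if i \<in> {l1+1..l1+l2} then rl B ! (i - l1 - 1)
     else if i \<in> {(l1+l2)+1..(l1+l2)+l3} then rl C ! (i - (l1+l2) - 1)
     else if i \<in> {(l1+l2+l3)+1..(l1+l2+l3)+l4} then rl D ! (i - (l1+l2+l3) - 1)
     else i)"

definition Nset :: "nat \<Rightarrow> nat \<Rightarrow> nat \<Rightarrow> nat \<Rightarrow> (nat \<Rightarrow> nat) set" where
  "Nset l1 l2 l3 l4 = {\<pi>. \<pi> permutes {1..l1+l2+l3+l4} \<and>
        (\<forall>i\<in>{1..l1+l2+l3+l4}. \<forall>j\<in>{1..l1+l2+l3+l4}. i < j \<and> same_block l1 l2 l3 l4 i j \<longrightarrow> \<pi> i > \<pi> j) \<and>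
        (\<forall>i\<in>{1..l1+l2}. \<pi> i \<noteq> i)}"

definition Tgt :: "nat \<Rightarrow> nat \<Rightarrow> nat \<Rightarrow> nat \<Rightarrow> ((nat set \<times> nat set) \<times> nat set) set" where
  "Tgt l1 l2 l3 l4 = Sigma (Tset (l1+l2+l3+l4) l1 l2 0 (int l1))
      (\<lambda>p. {C. C \<subseteq> {1..l1+l2+l3+l4} - (fst p \<union> snd p) \<and> card C = l3})"

definition phi :: "nat \<Rightarrow> nat \<Rightarrow> nat \<Rightarrow> (nat \<Rightarrow> nat) \<Rightarrow> (nat set \<times> nat set) \<times> nat set" where
  "phi l1 l2 l3 \<pi> = ((\<pi> ` {0+1..0+l1}, \<pi> ` {l1+1..l1+l2}), \<pi> ` {(l1+l2)+1..(l1+l2)+l3})"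

lemma Nset_dec:
  assumes "\<pi> \<in> Nset l1 l2 l3 l4"
  shows "\<And>i j. 0 < i \<Longrightarrow> i < j \<Longrightarrow> j \<le> 0 + l1 \<Longrightarrow> \<pi> j < \<pi> i"
    and "\<And>i j. l1 < i \<Longrightarrow> i < j \<Longrightarrow> j \<le> l1 + l2 \<Longrightarrow> \<pi> j < \<pi> i"
    and "\<And>i j. l1+l2 < i \<Longrightarrow> i < j \<Longrightarrow> j \<le> (l1+l2) + l3 \<Longrightarrow> \<pi> j < \<pi> i"
    and "\<And>i j. l1+l2+l3 < i \<Longrightarrow> i < j \<Longrightarrow> j \<le> (l1+l2+l3) + l4 \<Longrightarrow> \<pi> j < \<pi> i"
proof -
  have d: "\<And>i j. i \<in> {1..l1+l2+l3+l4} \<Longrightarrow> j \<in> {1..l1+l2+l3+l4} \<Longrightarrow> i < j \<Longrightarrow> same_block l1 l2 l3 l4 i j \<Longrightarrow> \<pi> j < \<pi> i"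
    using assms unfolding Nset_def by blast
  show "\<And>i j. 0 < i \<Longrightarrow> i < j \<Longrightarrow> j \<le> 0 + l1 \<Longrightarrow> \<pi> j < \<pi> i"
    by (rule d) (auto simp: same_block_def)
  show "\<And>i j. l1 < i \<Longrightarrow> i < j \<Longrightarrow> j \<le> l1 + l2 \<Longrightarrow> \<pi> j < \<pi> i"
    by (rule d) (auto simp: same_block_def)
  show "\<And>i j. l1+l2 < i \<Longrightarrow> i < j \<Longrightarrow> j \<le> (l1+l2) + l3 \<Longrightarrow> \<pi> j < \<pi> i"
    by (rule d) (auto simp: same_block_def)
  show "\<And>i j. l1+l2+l3 < i \<Longrightarrow> i < j \<Longrightarrow> j \<le> (l1+l2+l3) + l4 \<Longrightarrow> \<pi> j < \<pi> i"
    by (rule d) (auto simp: same_block_def)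
qed

lemma phi_mem:
  assumes P: "\<pi> \<in> Nset l1 l2 l3 l4"
  shows "phi l1 l2 l3 \<pi> \<in> Tgt l1 l2 l3 l4"
proof -
  let ?a = "l1+l2+l3+l4"
  have perm: "\<pi> permutes {1..?a}" and nf: "\<forall>i\<in>{1..l1+l2}. \<pi> i \<noteq> i"
    using P unfolding Nset_def by auto
  have img: "\<pi> ` {1..?a} = {1..?a}" using permutes_image[OF perm] .
  have inj: "inj \<pi>" using permutes_inj[OF perm] .
  let ?A = "\<pi> ` {0+1..0+l1}" and ?B = "\<pi> ` {l1+1..l1+l2}" and ?C = "\<pi> ` {(l1+l2)+1..(l1+l2)+l3}"
  have sA: "?A \<subseteq> {1..?a}" "?B \<subseteq> {1..?a}" "?C \<subseteq> {1..?a}" using img by auto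
  have dAB: "?A \<inter> ?B = {}" "?C \<inter> (?A \<union> ?B) = {}"
    using inj by (auto simp: inj_eq)
  have cA: "card ?A = l1" by (rule dec_card) (rule Nset_dec(1)[OF P])
  have cB: "card ?B = l2" by (rule dec_card) (rule Nset_dec(2)[OF P])
  have cC: "card ?C = l3" by (rule dec_card) (rule Nset_dec(3)[OF P])
  have gA: "good (int 0) ?A" by (rule dec_good) (rule Nset_dec(1)[OF P], use nf in auto)
  have gB: "good (int l1) ?B" by (rule dec_good) (rule Nset_dec(2)[OF P], use nf in auto)
  show ?thesis
    unfolding phi_def Tgt_def Tset_def using sA dAB cA cB cC gA gB by auto
qed

lemma Tgt_facts:
  assumes x: "((A,B),C) \<in> Tgt l1 l2 l3 l4"
  defines "D \<equiv> {1..l1+l2+l3+l4} - (A \<union> B \<union> C)"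
  shows "finite A" "finite B" "finite C" "finite D" "card A = l1" "card B = l2" "card C = l3" "card D = l4"
    "A \<union> B \<union> C \<union> D = {1..l1+l2+l3+l4}" "good 0 A" "good (int l1) B"
    "A \<inter> B = {}" "C \<inter> (A \<union> B) = {}"
proof -
  have h: "A \<subseteq> {1..l1+l2+l3+l4}" "B \<subseteq> {1..l1+l2+l3+l4}" "A \<inter> B = {}" "card A = l1" "card B = l2"
    "good 0 A" "good (int l1) B" "C \<subseteq> {1..l1+l2+l3+l4} - (A \<union> B)" "card C = l3"
    using x unfolding Tgt_def Tset_def by auto
  show fA: "finite A" "finite B" "finite C" "finite D"
    using h finite_subset unfolding D_def by (blast intro: finite_subset)+
  show "card A = l1" "card B = l2" "card C = l3" "good 0 A" "good (int l1) B" "A \<inter> B = {}"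
    using h by auto
  show "C \<inter> (A \<union> B) = {}" using h by auto
  show "A \<union> B \<union> C \<union> D = {1..l1+l2+l3+l4}" using h unfolding D_def by auto
  have "card (A \<union> B) = l1 + l2" using h fA by (simp add: card_Un_disjoint)
  moreover have "(A \<union> B) \<inter> C = {}" using h by auto
  ultimately have "card (A \<union> B \<union> C) = l1 + l2 + l3"
    using h fA by (simp add: card_Un_disjoint)
  moreover have "A \<union> B \<union> C \<subseteq> {1..l1+l2+l3+l4}" using h by auto
  ultimately show "card D = l4" unfolding D_def using fA by (simp add: card_Diff_subset)
qed

context
  fixes l1 l2 l3 l4 :: nat and A B C :: "nat set"
begin

abbreviation "DD \<equiv> {1..l1+l2+l3+l4} - (A \<union> B \<union> C)"
abbreviation "ps \<equiv> psi l1 l2 l3 l4 ((A,B),C)"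

lemma psi1: "i \<in> {0+1..0+l1} \<Longrightarrow> ps i = rl A ! (i - 0 - 1)"
  unfolding psi_def Let_def by simp
lemma psi2: "i \<in> {l1+1..l1+l2} \<Longrightarrow> ps i = rl B ! (i - l1 - 1)"
  unfolding psi_def Let_def by auto
lemma psi3: "i \<in> {(l1+l2)+1..(l1+l2)+l3} \<Longrightarrow> ps i = rl C ! (i - (l1+l2) - 1)"
  unfolding psi_def Let_def by auto
lemma psi4: "i \<in> {(l1+l2+l3)+1..(l1+l2+l3)+l4} \<Longrightarrow> ps i = rl DD ! (i - (l1+l2+l3) - 1)"
  unfolding psi_def Let_def by auto
lemma psi5: "i \<notin> {1..l1+l2+l3+l4} \<Longrightarrow> ps i = i"
  unfolding psi_def Let_def by auto

lemma blk_union: "{1..l1+l2+l3+l4} = {0+1..0+l1} \<union> {l1+1..l1+l2} \<union> {(l1+l2)+1..(l1+l2)+l3} \<union> {(l1+l2+l3)+1..(l1+l2+l3)+l4}"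
  by auto

context
  assumes x: "((A,B),C) \<in> Tgt l1 l2 l3 l4"
begin

lemma psi_img1: "ps ` {0+1..0+l1} = A"
proof -
  have "ps ` {0+1..0+l1} = (\<lambda>i. rl A ! (i - 0 - 1)) ` {0+1..0+l1}" by (rule image_cong[OF refl psi1])
  also have "\<dots> = A" by (rule rl_img) (use Tgt_facts[OF x] in auto)
  finally show ?thesis .
qed
lemma psi_img2: "ps ` {l1+1..l1+l2} = B"
proof -
  have "ps ` {l1+1..l1+l2} = (\<lambda>i. rl B ! (i - l1 - 1)) ` {l1+1..l1+l2}" by (rule image_cong[OF refl psi2])
  also have "\<dots> = B" by (rule rl_img) (use Tgt_facts[OF x] in auto)
  finally show ?thesis .
qed
lemma psi_img3: "ps ` {(l1+l2)+1..(l1+l2)+l3} = C"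
proof -
  have "ps ` {(l1+l2)+1..(l1+l2)+l3} = (\<lambda>i. rl C ! (i - (l1+l2) - 1)) ` {(l1+l2)+1..(l1+l2)+l3}"
    by (rule image_cong[OF refl psi3])
  also have "\<dots> = C" by (rule rl_img) (use Tgt_facts[OF x] in auto)
  finally show ?thesis .
qed
lemma psi_img4: "ps ` {(l1+l2+l3)+1..(l1+l2+l3)+l4} = DD"
proof -
  have "ps ` {(l1+l2+l3)+1..(l1+l2+l3)+l4} = (\<lambda>i. rl DD ! (i - (l1+l2+l3) - 1)) ` {(l1+l2+l3)+1..(l1+l2+l3)+l4}"
    by (rule image_cong[OF refl psi4])
  also have "\<dots> = DD" by (rule rl_img) (use Tgt_facts[OF x] in auto)
  finally show ?thesis .
qed

lemma psi_perm: "ps permutes {1..l1+l2+l3+l4}"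
proof (rule bij_imp_permutes)
  have "ps ` {1..l1+l2+l3+l4} = A \<union> B \<union> C \<union> DD"
    by (subst blk_union) (simp only: image_Un psi_img1 psi_img2 psi_img3 psi_img4)
  then have im: "ps ` {1..l1+l2+l3+l4} = {1..l1+l2+l3+l4}"
    using Tgt_facts(9)[OF x] by simp
  moreover have "inj_on ps {1..l1+l2+l3+l4}"
  proof (rule eq_card_imp_inj_on)
    show "card (ps ` {1..l1+l2+l3+l4}) = card {1..l1+l2+l3+l4}" by (simp only: im)
  qed simp
  ultimately show "bij_betw ps {1..l1+l2+l3+l4} {1..l1+l2+l3+l4}" by (simp add: bij_betw_def)
next
  fix i assume "i \<notin> {1..l1+l2+l3+l4}" then show "ps i = i" by (rule psi5)
qed

lemma psi_dec:
  assumes "i \<in> {1..l1+l2+l3+l4}" "j \<in> {1..l1+l2+l3+l4}" "i < j" "same_block l1 l2 l3 l4 i j"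
  shows "ps j < ps i"
proof -
  note f = Tgt_facts[OF x]
  consider "i \<in> {0+1..0+l1}" "j \<in> {0+1..0+l1}" | "i \<in> {l1+1..l1+l2}" "j \<in> {l1+1..l1+l2}"
    | "i \<in> {(l1+l2)+1..(l1+l2)+l3}" "j \<in> {(l1+l2)+1..(l1+l2)+l3}"
    | "i \<in> {(l1+l2+l3)+1..(l1+l2+l3)+l4}" "j \<in> {(l1+l2+l3)+1..(l1+l2+l3)+l4}"
    using assms(4) unfolding same_block_def by auto
  then show ?thesis
  proof cases
    case 1 then show ?thesis unfolding psi1[OF 1(1)] psi1[OF 1(2)]
      by (intro rl_blk_dec[of A l1]) (use f assms(3) in auto)
  next
    case 2 then show ?thesis unfolding psi2[OF 2(1)] psi2[OF 2(2)]
      by (intro rl_blk_dec[of B l2]) (use f assms(3) in auto)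
  next
    case 3 then show ?thesis unfolding psi3[OF 3(1)] psi3[OF 3(2)]
      by (intro rl_blk_dec[of C l3]) (use f assms(3) in auto)
  next
    case 4 then show ?thesis unfolding psi4[OF 4(1)] psi4[OF 4(2)]
      by (intro rl_blk_dec[of DD l4]) (use f assms(3) in auto)
  qed
qed

lemma psi_nf:
  assumes "i \<in> {1..l1+l2}"
  shows "ps i \<noteq> i"
proof -
  note f = Tgt_facts[OF x]
  consider "i \<in> {0+1..0+l1}" | "i \<in> {l1+1..l1+l2}" using assms by (cases "i \<le> l1") auto
  then show ?thesis
  proof cases
    case 1 then show ?thesis unfolding psi1[OF 1] by (rule good_blk[of A l1 0 i, rotated 3]) (use f in auto)
  next
    case 2 then show ?thesis unfolding psi2[OF 2] by (rule good_blk[of B l2 l1 i, rotated 3]) (use f in auto)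
  qed
qed

lemma psi_mem: "ps \<in> Nset l1 l2 l3 l4"
  unfolding Nset_def using psi_perm psi_dec psi_nf by auto

lemma phi_psi: "phi l1 l2 l3 ps = ((A,B),C)"
  unfolding phi_def using psi_img1 psi_img2 psi_img3 by simp

end
end

lemma psi_phi:
  assumes P: "\<pi> \<in> Nset l1 l2 l3 l4"
  shows "psi l1 l2 l3 l4 (phi l1 l2 l3 \<pi>) = \<pi>"
proof
  fix i
  let ?A = "\<pi> ` {0+1..0+l1}" and ?B = "\<pi> ` {l1+1..l1+l2}" and ?C = "\<pi> ` {(l1+l2)+1..(l1+l2)+l3}"
  have perm: "\<pi> permutes {1..l1+l2+l3+l4}" using P unfolding Nset_def by auto
  have D: "{1..l1+l2+l3+l4} - (?A \<union> ?B \<union> ?C) = \<pi> ` {(l1+l2+l3)+1..(l1+l2+l3)+l4}"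
  proof -
    have inj: "inj \<pi>" using permutes_inj[OF perm] .
    have "{1..l1+l2+l3+l4} = \<pi> ` {1..l1+l2+l3+l4}" using permutes_image[OF perm] by simp
    also have "\<dots> = ?A \<union> ?B \<union> ?C \<union> \<pi> ` {(l1+l2+l3)+1..(l1+l2+l3)+l4}"
      by (subst blk_union) (simp add: image_Un)
    finally have e: "{1..l1+l2+l3+l4} = ?A \<union> ?B \<union> ?C \<union> \<pi> ` {(l1+l2+l3)+1..(l1+l2+l3)+l4}" .
    have "\<pi> ` {(l1+l2+l3)+1..(l1+l2+l3)+l4} \<inter> (?A \<union> ?B \<union> ?C) = {}"
      using inj by (auto simp: inj_eq)
    then show ?thesis by (subst e) blast
  qed
  show "psi l1 l2 l3 l4 (phi l1 l2 l3 \<pi>) i = \<pi> i"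
  proof -
    consider "i \<in> {0+1..0+l1}" | "i \<in> {l1+1..l1+l2}" | "i \<in> {(l1+l2)+1..(l1+l2)+l3}"
      | "i \<in> {(l1+l2+l3)+1..(l1+l2+l3)+l4}" | "i \<notin> {1..l1+l2+l3+l4}"
      unfolding atLeastAtMost_iff by (atomize_elim) linarith
    then show ?thesis
    proof cases
      case 1 then show ?thesis unfolding phi_def psi1[OF 1]
        using dec_blk[of 0 l1 \<pi> i, OF Nset_dec(1)[OF P] 1] by simp
    next
      case 2 then show ?thesis unfolding phi_def psi2[OF 2]
        using dec_blk[of l1 l2 \<pi> i, OF Nset_dec(2)[OF P] 2] by simp
    next
      case 3 then show ?thesis unfolding phi_def psi3[OF 3]
        using dec_blk[of "l1+l2" l3 \<pi> i, OF Nset_dec(3)[OF P] 3] by simp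
    next
      case 4 then show ?thesis unfolding phi_def psi4[OF 4] D
        using dec_blk[of "l1+l2+l3" l4 \<pi> i, OF Nset_dec(4)[OF P] 4] by simp
    next
      case 5 then show ?thesis unfolding phi_def psi5[OF 5] using permutes_not_in[OF perm 5] by simp
    qed
  qed
qed

lemma Ncount_Nset: "Ncount l1 l2 l3 l4 = card (Nset l1 l2 l3 l4)"
  unfolding Ncount_def Nset_def Let_def by simp

lemma card_Tgt: "card (Tgt l1 l2 l3 l4) = (l3 + l4 choose l3) * T (l1+l2+l3+l4) l1 l2 0 (int l1)"
proof -
  let ?a = "l1+l2+l3+l4"
  have "card (Tgt l1 l2 l3 l4) = (\<Sum>p\<in>Tset ?a l1 l2 0 (int l1). card {C. C \<subseteq> {1..?a} - (fst p \<union> snd p) \<and> card C = l3})"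
    unfolding Tgt_def by (rule card_SigmaI) (auto simp: finite_Tset)
  also have "\<dots> = (\<Sum>p\<in>Tset ?a l1 l2 0 (int l1). (l3 + l4 choose l3))"
  proof (rule sum.cong[OF refl])
    fix p assume p: "p \<in> Tset ?a l1 l2 0 (int l1)"
    obtain X1 X2 where pe: "p = (X1,X2)" by (cases p)
    have h: "X1 \<subseteq> {1..?a}" "X2 \<subseteq> {1..?a}" "X1 \<inter> X2 = {}" "card X1 = l1" "card X2 = l2"
      using p pe unfolding Tset_def by auto
    have f: "finite X1" "finite X2" using h(1,2) finite_subset by blast+
    have "card (X1 \<union> X2) = l1 + l2" using h f by (simp add: card_Un_disjoint)
    then have "card ({1..?a} - (X1 \<union> X2)) = l3 + l4" using h by (simp add: card_Diff_subset f)
    then show "card {C. C \<subseteq> {1..?a} - (fst p \<union> snd p) \<and> card C = l3} = (l3 + l4 choose l3)"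
      using n_subsets[of "{1..?a} - (X1 \<union> X2)" l3] pe by simp
  qed
  also have "\<dots> = (l3 + l4 choose l3) * T ?a l1 l2 0 (int l1)" by (simp add: T_def)
  finally show ?thesis .
qed

lemma Ncount_eq: "Ncount l1 l2 l3 l4 = (l3 + l4 choose l3) * T (l1+l2+l3+l4) l1 l2 0 (int l1)"
proof -
  have "card (Nset l1 l2 l3 l4) = card (Tgt l1 l2 l3 l4)"
  proof (rule card_by_inverse[where f="phi l1 l2 l3" and g="psi l1 l2 l3 l4"])
    fix x assume "x \<in> Nset l1 l2 l3 l4" then show "phi l1 l2 l3 x \<in> Tgt l1 l2 l3 l4" by (rule phi_mem)
  next
    fix y assume y: "y \<in> Tgt l1 l2 l3 l4"
    obtain A B C where ye: "y = ((A,B),C)" by (metis prod.collapse)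
    show "psi l1 l2 l3 l4 y \<in> Nset l1 l2 l3 l4" using psi_mem y ye by blast
  next
    fix x assume "x \<in> Nset l1 l2 l3 l4" then show "psi l1 l2 l3 l4 (phi l1 l2 l3 x) = x" by (rule psi_phi)
  next
    fix y assume y: "y \<in> Tgt l1 l2 l3 l4"
    obtain A B C where ye: "y = ((A,B),C)" by (metis prod.collapse)
    show "phi l1 l2 l3 (psi l1 l2 l3 l4 y) = y" using phi_psi y ye by blast
  qed
  then show ?thesis using Ncount_Nset card_Tgt by simp
qed

lemma blocksort_rl:
  assumes "distinct w"
  shows "blocksort a1 w = rl (set (take a1 w)) @ rl (set (drop a1 w))"
proof -
  have "distinct (take a1 w)" "distinct (drop a1 w)" using assms by auto
  then show ?thesis unfolding blocksort_def rl_def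
    by (simp add: sorted_list_of_set_sort_remdups distinct_remdups_id)
qed

lemma nth_cond_split:
  assumes "length L1 = a1" "length L2 = a2"
  shows "(\<forall>i\<in>{1..a1+a2}. (L1 @ L2) ! (i-1) \<noteq> i) \<longleftrightarrow>
         (\<forall>j<a1. L1 ! j \<noteq> 0 + 1 + j) \<and> (\<forall>j<a2. L2 ! j \<noteq> a1 + 1 + j)"
proof safe
  fix j assume h: "\<forall>i\<in>{1..a1+a2}. (L1 @ L2) ! (i-1) \<noteq> i" and j: "j < a1" and e: "L1 ! j = 0 + 1 + j"
  have "j+1 \<in> {1..a1+a2}" using j by auto
  then have "(L1 @ L2) ! (j+1-1) \<noteq> j+1" using h by blast
  then show False using e j assms by (simp add: nth_append)
next
  fix j assume h: "\<forall>i\<in>{1..a1+a2}. (L1 @ L2) ! (i-1) \<noteq> i" and j: "j < a2" and e: "L2 ! j = a1 + 1 + j"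
  have "a1+1+j \<in> {1..a1+a2}" using j by auto
  then have "(L1 @ L2) ! (a1+1+j-1) \<noteq> a1+1+j" using h by blast
  then show False using e j assms by (simp add: nth_append)
next
  fix i assume h1: "\<forall>j<a1. L1 ! j \<noteq> 0 + 1 + j" and h2: "\<forall>j<a2. L2 ! j \<noteq> a1 + 1 + j"
    and i: "i \<in> {1..a1+a2}" and e: "(L1 @ L2) ! (i-1) = i"
  show False
  proof (cases "i - 1 < a1")
    case True
    then show False using h1[rule_format, OF True] e assms i by (simp add: nth_append)
  next
    case False
    then have lt: "i - 1 - a1 < a2" using i by auto
    have eq: "a1 + 1 + (i-1-a1) = i" using False i by auto
    have "(L1 @ L2) ! (i-1) = L2 ! (i-1-a1)" using False assms by (simp add: nth_append)
    then show False using h2[rule_format, OF lt] e eq by simp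
  qed
qed

lemma BS:
  assumes "distinct w" "length w = a1 + a2"
  shows "(\<forall>i\<in>{1..a1+a2}. blocksort a1 w ! (i-1) \<noteq> i) \<longleftrightarrow>
         good 0 (set (take a1 w)) \<and> good (int a1) (set (drop a1 w))"
proof -
  have c1: "card (set (take a1 w)) = a1" using assms by (simp add: distinct_card)
  have c2: "card (set (drop a1 w)) = a2" using assms by (simp add: distinct_card)
  have l: "length (rl (set (take a1 w))) = a1" "length (rl (set (drop a1 w))) = a2"
    using rl_basic c1 c2 by auto
  show ?thesis
    unfolding blocksort_rl[OF assms(1)] nth_cond_split[OF l]
    using good_rl[of "set (take a1 w)" 0] good_rl[of "set (drop a1 w)" a1] c1 c2 by simp
qed

definition Hset :: "nat \<Rightarrow> nat \<Rightarrow> nat \<Rightarrow> (nat set \<times> nat set) set" where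
  "Hset a1 a2 s = {(X,W1). X \<subseteq> {1..a1+a2} \<and> s \<le> a1+a2 \<and> card X = a1+a2-s \<and>
     W1 \<subseteq> X \<union> {a1+a2+1..a1+a2+s} \<and> card W1 = a1 \<and> good 0 W1 \<and>
     good (int a1) ((X \<union> {a1+a2+1..a1+a2+s}) - W1)}"

definition SF :: "nat \<Rightarrow> nat \<Rightarrow> nat \<Rightarrow> (nat set \<times> nat list) set" where
  "SF a1 a2 s = {(X, w). X \<subseteq> {1..a1+a2} \<and> s \<le> a1+a2 \<and> card X = a1+a2 - s \<and>
        length w = a1+a2 \<and> distinct w \<and> set w = X \<union> {a1+a2+1..a1+a2+s} \<and>
        (\<forall>i\<in>{1..a1+a2}. blocksort a1 w ! (i - 1) \<noteq> i)}"

lemma F_SF: "F a1 a2 s = card (SF a1 a2 s)"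
  unfolding F_def SF_def Let_def by simp

lemma card_XB:
  assumes "X \<subseteq> {1..a}" "card X = a - s" "s \<le> a"
  shows "card (X \<union> {a+1..a+s}) = a"
proof -
  have "finite X" using assms(1) finite_subset by blast
  moreover have "X \<inter> {a+1..a+s} = {}" using assms(1) by auto
  ultimately show ?thesis using assms by (simp add: card_Un_disjoint)
qed

lemma finite_Hset: "finite (Hset a1 a2 s)"
proof -
  have "Hset a1 a2 s \<subseteq> Pow {1..a1+a2+s} \<times> Pow {1..a1+a2+s}"
  proof
    fix p assume "p \<in> Hset a1 a2 s"
    then obtain X W1 where pe: "p = (X,W1)" and h: "X \<subseteq> {1..a1+a2}" "W1 \<subseteq> X \<union> {a1+a2+1..a1+a2+s}"
      unfolding Hset_def by auto
    have "X \<subseteq> {1..a1+a2+s}" using h(1) by auto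
    moreover have "W1 \<subseteq> {1..a1+a2+s}" using h by fastforce
    ultimately show "p \<in> Pow {1..a1+a2+s} \<times> Pow {1..a1+a2+s}" using pe by auto
  qed
  then show ?thesis by (rule finite_subset) auto
qed

definition Sig :: "nat \<Rightarrow> nat \<Rightarrow> nat \<Rightarrow> ((nat set \<times> nat set) \<times> (nat list \<times> nat list)) set" where
  "Sig a1 a2 s = Sigma (Hset a1 a2 s)
     (\<lambda>p. permutations_of_set (snd p) \<times> permutations_of_set ((fst p \<union> {a1+a2+1..a1+a2+s}) - snd p))"

lemma card_Sig: "card (Sig a1 a2 s) = fact a1 * fact a2 * card (Hset a1 a2 s)"
proof -
  have "card (Sig a1 a2 s) = (\<Sum>p\<in>Hset a1 a2 s. card (permutations_of_set (snd p) \<times>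
          permutations_of_set ((fst p \<union> {a1+a2+1..a1+a2+s}) - snd p)))"
    unfolding Sig_def by (rule card_SigmaI) (auto simp: finite_Hset finite_permutations_of_set)
  also have "\<dots> = (\<Sum>p\<in>Hset a1 a2 s. fact a1 * fact a2)"
  proof (rule sum.cong[OF refl])
    fix p assume p: "p \<in> Hset a1 a2 s"
    obtain X W1 where pe: "p = (X,W1)" by (cases p)
    have h: "X \<subseteq> {1..a1+a2}" "s \<le> a1+a2" "card X = a1+a2-s" "W1 \<subseteq> X \<union> {a1+a2+1..a1+a2+s}" "card W1 = a1"
      using p pe unfolding Hset_def by auto
    have cXB: "card (X \<union> {a1+a2+1..a1+a2+s}) = a1+a2" using card_XB[OF h(1) h(3) h(2)] .
    have fXB: "finite (X \<union> {a1+a2+1..a1+a2+s})" using h(1) finite_subset by auto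
    have fW: "finite W1" using h(4) fXB finite_subset by blast
    have "card ((X \<union> {a1+a2+1..a1+a2+s}) - W1) = a2" using h(4,5) cXB fW by (simp add: card_Diff_subset)
    then show "card (permutations_of_set (snd p) \<times> permutations_of_set ((fst p \<union> {a1+a2+1..a1+a2+s}) - snd p))
        = fact a1 * fact a2"
      using pe h(5) fW fXB by (simp add: card_cartesian_product)
  qed
  also have "\<dots> = fact a1 * fact a2 * card (Hset a1 a2 s)" by simp
  finally show ?thesis .
qed

lemma F_Hset: "F a1 a2 s = fact a1 * fact a2 * card (Hset a1 a2 s)"
proof -
  let ?f = "\<lambda>z::(nat set \<times> nat set) \<times> (nat list \<times> nat list). (fst (fst z), fst (snd z) @ snd (snd z))"
  let ?g = "\<lambda>y::nat set \<times> nat list. ((fst y, set (take a1 (snd y))), (take a1 (snd y), drop a1 (snd y)))"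
  have "card (Sig a1 a2 s) = card (SF a1 a2 s)"
  proof (rule card_by_inverse[where f="?f" and g="?g"])
    fix z assume z: "z \<in> Sig a1 a2 s"
    obtain X W1 p q where ze: "z = ((X,W1),(p,q))" by (metis prod.collapse)
    have h: "X \<subseteq> {1..a1+a2}" "s \<le> a1+a2" "card X = a1+a2-s" "W1 \<subseteq> X \<union> {a1+a2+1..a1+a2+s}" "card W1 = a1"
      "good 0 W1" "good (int a1) ((X \<union> {a1+a2+1..a1+a2+s}) - W1)"
      "set p = W1" "distinct p" "set q = (X \<union> {a1+a2+1..a1+a2+s}) - W1" "distinct q"
      using z ze unfolding Sig_def Hset_def permutations_of_set_def by auto
    have cXB: "card (X \<union> {a1+a2+1..a1+a2+s}) = a1+a2" using card_XB[OF h(1) h(3) h(2)] .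
    have fXB: "finite (X \<union> {a1+a2+1..a1+a2+s})" using h(1) finite_subset by auto
    have fW: "finite W1" using h(4) fXB finite_subset by blast
    have lp: "length p = a1" using h(5,8,9) distinct_card by metis
    have "card ((X \<union> {a1+a2+1..a1+a2+s}) - W1) = a2" using h(4,5) cXB fW by (simp add: card_Diff_subset)
    then have lq: "length q = a2" using h(10,11) distinct_card by metis
    have d: "distinct (p @ q)" using h(8-11) by auto
    have st: "set (p @ q) = X \<union> {a1+a2+1..a1+a2+s}" using h(4,8,10) by auto
    have tk: "take a1 (p @ q) = p" "drop a1 (p @ q) = q" using lp by auto
    have bs: "\<forall>i\<in>{1..a1+a2}. blocksort a1 (p @ q) ! (i - 1) \<noteq> i"
      using BS[OF d] lp lq tk h(6,7,8,10) by simp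
    show "?f z \<in> SF a1 a2 s" unfolding SF_def using ze h(1-3) lp lq d st bs by simp
  next
    fix y assume y: "y \<in> SF a1 a2 s"
    obtain X w where ye: "y = (X,w)" by (cases y)
    have h: "X \<subseteq> {1..a1+a2}" "s \<le> a1+a2" "card X = a1+a2-s" "length w = a1+a2" "distinct w"
      "set w = X \<union> {a1+a2+1..a1+a2+s}" "\<forall>i\<in>{1..a1+a2}. blocksort a1 w ! (i - 1) \<noteq> i"
      using y ye unfolding SF_def by auto
    have g: "good 0 (set (take a1 w))" "good (int a1) (set (drop a1 w))" using BS[OF h(5) h(4)] h(7) by auto
    have sd: "set (drop a1 w) = (X \<union> {a1+a2+1..a1+a2+s}) - set (take a1 w)"
    proof -
      have "set w = set (take a1 w) \<union> set (drop a1 w)" by (metis append_take_drop_id set_append)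
      moreover have "set (take a1 w) \<inter> set (drop a1 w) = {}"
        using h(5) by (metis append_take_drop_id distinct_append)
      ultimately show ?thesis using h(6) by auto
    qed
    have "set (take a1 w) \<subseteq> X \<union> {a1+a2+1..a1+a2+s}" using h(6) set_take_subset by metis
    moreover have "card (set (take a1 w)) = a1" using h(4,5) by (simp add: distinct_card)
    ultimately have "(X, set (take a1 w)) \<in> Hset a1 a2 s"
      unfolding Hset_def using h(1-3) g sd by auto
    moreover have "distinct (take a1 w)" "distinct (drop a1 w)" using h(5) by auto
    ultimately show "?g y \<in> Sig a1 a2 s"
      unfolding Sig_def permutations_of_set_def using ye sd by auto
  next
    fix z assume z: "z \<in> Sig a1 a2 s"
    obtain X W1 p q where ze: "z = ((X,W1),(p,q))" by (metis prod.collapse)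
    have h: "card W1 = a1" "set p = W1" "distinct p"
      using z ze unfolding Sig_def Hset_def permutations_of_set_def by auto
    have lp: "length p = a1" using h distinct_card by metis
    show "?g (?f z) = z" using ze lp h(2) by simp
  next
    fix y assume "y \<in> SF a1 a2 s"
    show "?f (?g y) = y" by simp
  qed
  then show ?thesis using F_SF card_Sig by simp
qed

lemma good_union_big:
  assumes fin: "finite X1" "finite B1"
    and lt: "\<And>b x. b \<in> B1 \<Longrightarrow> x \<in> X1 \<Longrightarrow> x < b"
    and big: "\<And>b. b \<in> B1 \<Longrightarrow> c + int (card (B1 \<union> X1)) < int b"
  shows "good c (B1 \<union> X1) \<longleftrightarrow> good (c + int (card B1)) X1"
proof -
  have disj: "B1 \<inter> X1 = {}" using lt by fastforce
  have cX: "card {x\<in>B1 \<union> X1. v < x} = card B1 + card {x\<in>X1. v < x}" if v: "v \<in> X1" for v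
  proof -
    have "{x\<in>B1 \<union> X1. v < x} = B1 \<union> {x\<in>X1. v < x}" using lt v by auto
    moreover have "B1 \<inter> {x\<in>X1. v < x} = {}" using disj by auto
    ultimately show ?thesis using fin by (simp add: card_Un_disjoint)
  qed
  have cB: "card {x\<in>B1 \<union> X1. v < x} < card (B1 \<union> X1)" if v: "v \<in> B1" for v
    by (rule psubset_card_mono) (use fin v in auto)
  have "good c (B1 \<union> X1) \<longleftrightarrow> (\<forall>v\<in>X1. int v \<noteq> c + 1 + int (card {x\<in>B1 \<union> X1. v < x}))"
    unfolding good_def using cB big by fastforce
  also have "\<dots> \<longleftrightarrow> good (c + int (card B1)) X1"
    unfolding good_def by (rule ball_cong[OF refl], subst cX, assumption, simp add: algebra_simps)
  finally show ?thesis .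
qed

definition Msum :: "nat \<Rightarrow> nat \<Rightarrow> nat \<Rightarrow> nat set" where
  "Msum a1 a2 s = {m. m \<le> s \<and> m \<le> a1 \<and> s - m \<le> a2}"

definition Sig2 where
  "Sig2 a1 a2 s = Sigma (Msum a1 a2 s) (\<lambda>m. {B. B \<subseteq> {a1+a2+1..a1+a2+s} \<and> card B = m} \<times>
      Tset (a1+a2) (a1-m) (a2-(s-m)) (int m) (int (a1-m+s)))"

lemma card_Sig2: "card (Sig2 a1 a2 s) = (\<Sum>m\<in>Msum a1 a2 s. (s choose m) * T (a1+a2) (a1-m) (a2-(s-m)) (int m) (int (a1-m+s)))"
proof -
  have fM: "finite (Msum a1 a2 s)" unfolding Msum_def by auto
  have "card (Sig2 a1 a2 s) = (\<Sum>m\<in>Msum a1 a2 s. card ({B. B \<subseteq> {a1+a2+1..a1+a2+s} \<and> card B = m} \<times>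
      Tset (a1+a2) (a1-m) (a2-(s-m)) (int m) (int (a1-m+s))))"
    unfolding Sig2_def by (rule card_SigmaI) (auto simp: fM finite_Tset)
  also have "\<dots> = (\<Sum>m\<in>Msum a1 a2 s. (s choose m) * T (a1+a2) (a1-m) (a2-(s-m)) (int m) (int (a1-m+s)))"
    by (rule sum.cong[OF refl]) (simp add: card_cartesian_product n_subsets T_def)
  finally show ?thesis .
qed

lemma Hset_Sig2: "card (Hset a1 a2 s) = card (Sig2 a1 a2 s)"
proof -
  define Bg where "Bg = {a1+a2+1..a1+a2+s}"
  have fBg: "finite Bg" and cBg: "card Bg = s" unfolding Bg_def by auto
  let ?h = "\<lambda>p::nat set \<times> nat set. (card (snd p \<inter> Bg), (snd p \<inter> Bg, (snd p - Bg, fst p - snd p)))"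
  let ?k = "\<lambda>x::nat \<times> nat set \<times> nat set \<times> nat set. (fst (snd (snd x)) \<union> snd (snd (snd x)), fst (snd (snd x)) \<union> fst (snd x))"
  show ?thesis
  proof (rule card_by_inverse[where f="?h" and g="?k"])
    fix p assume p: "p \<in> Hset a1 a2 s"
    obtain X W1 where pe: "p = (X,W1)" by (cases p)
    have h: "X \<subseteq> {1..a1+a2}" "s \<le> a1+a2" "card X = a1+a2-s" "W1 \<subseteq> X \<union> Bg" "card W1 = a1"
      "good 0 W1" "good (int a1) ((X \<union> Bg) - W1)"
      using p pe unfolding Hset_def Bg_def by auto
    define B1 where "B1 = W1 \<inter> Bg"
    define X1 where "X1 = W1 - Bg"
    define X2 where "X2 = X - W1"
    define m where "m = card B1"
    have fX: "finite X" using h(1) finite_subset by blast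
    have fB1: "finite B1" unfolding B1_def using fBg by auto
    have fX1: "finite X1" "X1 \<subseteq> X" unfolding X1_def using h(4) fX by (auto intro: finite_subset)
    have fX2: "finite X2" unfolding X2_def using fX by auto
    have bigB: "\<And>b. b \<in> Bg \<Longrightarrow> a1 + a2 < b" unfolding Bg_def by auto
    have smallX: "\<And>x. x \<in> X \<Longrightarrow> x \<le> a1 + a2" using h(1) by auto
    have W1: "W1 = B1 \<union> X1" unfolding B1_def X1_def by auto
    have "B1 \<inter> X1 = {}" unfolding B1_def X1_def by auto
    then have cW1: "card W1 = m + card X1" unfolding W1 m_def using fB1 fX1 by (simp add: card_Un_disjoint)
    then have m1: "m \<le> a1" and cX1: "card X1 = a1 - m" using h(5) by auto
    have ms: "m \<le> s" unfolding m_def B1_def using card_mono[OF fBg, of "W1 \<inter> Bg"] cBg by auto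
    have W2: "(X \<union> Bg) - W1 = (Bg - B1) \<union> X2" unfolding B1_def X2_def by auto
    have cXB: "card (X \<union> Bg) = a1+a2" unfolding Bg_def using card_XB[OF h(1) h(3) h(2)] .
    have fW1: "finite W1" using W1 fB1 fX1 by auto
    have cW2: "card ((X \<union> Bg) - W1) = a2" using h(4,5) cXB fW1 by (simp add: card_Diff_subset)
    have cBB: "card (Bg - B1) = s - m" unfolding m_def using fBg cBg by (simp add: card_Diff_subset B1_def)
    have "(Bg - B1) \<inter> X2 = {}" using bigB smallX unfolding X2_def by fastforce
    then have "card ((Bg - B1) \<union> X2) = (s - m) + card X2"
      using fBg fX2 cBB by (simp add: card_Un_disjoint)
    then have sm: "s - m \<le> a2" and cX2: "card X2 = a2 - (s - m)" using cW2 W2 by auto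
    have gX1: "good (int m) X1"
    proof -
      have "good 0 (B1 \<union> X1) \<longleftrightarrow> good (0 + int (card B1)) X1"
      proof (rule good_union_big[OF fX1(1) fB1])
        fix b x assume "b \<in> B1" "x \<in> X1"
        then show "x < b" using bigB smallX fX1(2) unfolding B1_def by force
      next
        fix b assume "b \<in> B1"
        then show "0 + int (card (B1 \<union> X1)) < int b"
          using bigB h(5) W1 unfolding B1_def by force
      qed
      then show ?thesis using h(6) W1 m_def by simp
    qed
    have gX2: "good (int (a1 - m + s)) X2"
    proof -
      have fBB: "finite (Bg - B1)" using fBg by auto
      have "good (int a1) ((Bg - B1) \<union> X2) \<longleftrightarrow> good (int a1 + int (card (Bg - B1))) X2"
      proof (rule good_union_big[OF fX2 fBB])
        fix b x assume "b \<in> Bg - B1" "x \<in> X2"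
        then show "x < b" using bigB smallX unfolding X2_def by force
      next
        fix b assume "b \<in> Bg - B1"
        then show "int a1 + int (card ((Bg - B1) \<union> X2)) < int b"
          using bigB cW2 W2 by force
      qed
      moreover have "int a1 + int (card (Bg - B1)) = int (a1 - m + s)" using cBB m1 ms by simp
      ultimately show ?thesis using h(7) W2 by simp
    qed
    have "m \<in> Msum a1 a2 s" unfolding Msum_def using m1 ms sm by simp
    moreover have "B1 \<subseteq> {a1+a2+1..a1+a2+s} \<and> card B1 = m" unfolding B1_def m_def Bg_def by auto
    moreover have "(X1, X2) \<in> Tset (a1+a2) (a1-m) (a2-(s-m)) (int m) (int (a1-m+s))"
      unfolding Tset_def using fX1(2) h(1) cX1 cX2 gX1 gX2 unfolding X1_def X2_def by auto
    ultimately show "?h p \<in> Sig2 a1 a2 s"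
      unfolding Sig2_def using pe B1_def X1_def X2_def m_def by simp
  next
    fix x assume x: "x \<in> Sig2 a1 a2 s"
    obtain m B1 X1 X2 where xe: "x = (m, B1, X1, X2)" by (metis prod.collapse)
    have h: "m \<le> s" "m \<le> a1" "s - m \<le> a2" "B1 \<subseteq> Bg" "card B1 = m"
      "X1 \<subseteq> {1..a1+a2}" "X2 \<subseteq> {1..a1+a2}" "X1 \<inter> X2 = {}" "card X1 = a1 - m" "card X2 = a2 - (s-m)"
      "good (int m) X1" "good (int (a1-m+s)) X2"
      using x xe unfolding Sig2_def Msum_def Tset_def Bg_def by (auto simp: algebra_simps)
    have fX1: "finite X1" "finite X2" using h(6,7) finite_subset by blast+
    have fB1: "finite B1" using h(4) fBg finite_subset by blast
    have bigB: "\<And>b. b \<in> Bg \<Longrightarrow> a1 + a2 < b" unfolding Bg_def by auto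
    let ?X = "X1 \<union> X2" and ?W = "X1 \<union> B1"
    have sX: "?X \<subseteq> {1..a1+a2}" using h by auto
    have sa: "s \<le> a1 + a2" using h by auto
    have cX: "card ?X = a1+a2-s" using h fX1 by (simp add: card_Un_disjoint)
    have sW: "?W \<subseteq> ?X \<union> {a1+a2+1..a1+a2+s}" using h(4) unfolding Bg_def by auto
    have dXB: "X1 \<inter> B1 = {}" using h(4,6) bigB by fastforce
    have cW: "card ?W = a1" using h fX1 fB1 dXB by (simp add: card_Un_disjoint)
    have g1: "good 0 ?W"
    proof -
      have "good 0 (B1 \<union> X1) \<longleftrightarrow> good (0 + int (card B1)) X1"
      proof (rule good_union_big[OF fX1(1) fB1])
        fix b y assume "b \<in> B1" "y \<in> X1"
        then show "y < b" using bigB h(4,6) by force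
      next
        fix b assume "b \<in> B1"
        then show "0 + int (card (B1 \<union> X1)) < int b"
          using bigB h(4) cW by (force simp: Un_commute)
      qed
      then show ?thesis using h(5,11) by (simp add: Un_commute)
    qed
    have g2: "good (int a1) ((?X \<union> {a1+a2+1..a1+a2+s}) - ?W)"
    proof -
      have e: "(?X \<union> {a1+a2+1..a1+a2+s}) - ?W = (Bg - B1) \<union> X2"
        using h(4,6,7,8) bigB unfolding Bg_def by fastforce
      have fBB: "finite (Bg - B1)" using fBg by auto
      have cBB: "card (Bg - B1) = s - m" using fBg cBg h(4,5) by (simp add: card_Diff_subset fB1)
      have "good (int a1) ((Bg - B1) \<union> X2) \<longleftrightarrow> good (int a1 + int (card (Bg - B1))) X2"
      proof (rule good_union_big[OF fX1(2) fBB])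
        fix b y assume "b \<in> Bg - B1" "y \<in> X2"
        then show "y < b" using bigB h(7) by force
      next
        fix b assume b: "b \<in> Bg - B1"
        have "card ((Bg - B1) \<union> X2) = (s - m) + (a2 - (s - m))"
          using cBB h(10) fBB fX1(2) h(7) bigB by (subst card_Un_disjoint) force+
        then show "int a1 + int (card ((Bg - B1) \<union> X2)) < int b"
          using bigB[of b] b h(3) by simp
      qed
      moreover have "int a1 + int (card (Bg - B1)) = int (a1 - m + s)" using cBB h(1,2) by simp
      ultimately show ?thesis using e h(12) by simp
    qed
    show "?k x \<in> Hset a1 a2 s" unfolding Hset_def using xe sX sa cX sW cW g1 g2 by simp
  next
    fix p assume p: "p \<in> Hset a1 a2 s"
    obtain X W1 where pe: "p = (X,W1)" by (cases p)
    have h: "W1 \<subseteq> X \<union> Bg" "X \<subseteq> {1..a1+a2}" using p pe unfolding Hset_def Bg_def by auto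
    have "X \<inter> Bg = {}" using h(2) unfolding Bg_def by auto
    then show "?k (?h p) = p" using pe h by auto
  next
    fix x assume x: "x \<in> Sig2 a1 a2 s"
    obtain m B1 X1 X2 where xe: "x = (m, B1, X1, X2)" by (metis prod.collapse)
    have h: "B1 \<subseteq> Bg" "card B1 = m" "X1 \<subseteq> {1..a1+a2}" "X2 \<subseteq> {1..a1+a2}" "X1 \<inter> X2 = {}"
      using x xe unfolding Sig2_def Tset_def Bg_def by auto
    have bigB: "\<And>b. b \<in> Bg \<Longrightarrow> a1 + a2 < b" unfolding Bg_def by auto
    have e1: "(X1 \<union> B1) \<inter> Bg = B1" using h bigB by fastforce
    have e2: "(X1 \<union> B1) - Bg = X1" using h bigB by fastforce
    have e3: "(X1 \<union> X2) - (X1 \<union> B1) = X2" using h bigB by fastforce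
    show "?h (?k x) = x" using xe e1 e2 e3 h(2) by simp
  qed
qed

lemma F_sum: "F a1 a2 s = fact a1 * fact a2 *
   (\<Sum>m\<in>Msum a1 a2 s. (s choose m) * T (a1+a2) (a1-m) (a2-(s-m)) (int m) (int (a1-m+s)))"
  using F_Hset Hset_Sig2 card_Sig2 by simp

theorem mainTheorem11:
  fixes a1 a2 s :: nat
  shows "F a1 a2 s = fact a1 * fact a2 * G a1 a2 s"
proof -
  have "G a1 a2 s = (\<Sum>m\<in>Msum a1 a2 s. (s choose m) * T (a1+a2) (a1-m) (a2-(s-m)) (int m) (int (a1-m+s)))"
    unfolding G_def Msum_def[symmetric]
  proof (rule sum.cong[OF refl])
    fix m assume m: "m \<in> Msum a1 a2 s"
    then have h: "m \<le> s" "m \<le> a1" "s - m \<le> a2" unfolding Msum_def by auto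
    let ?k1 = "a1 - m" and ?k2 = "a2 - (s - m)"
    have e1: "?k1 + ?k2 + m + (s - m) = a1 + a2" using h by simp
    have e2: "?k1 + ?k2 + s = a1 + a2" using h by simp
    have e3: "m + (s - m) = s" using h by simp
    have "Ncount ?k1 ?k2 m (s - m) = (s choose m) * T (a1+a2) ?k1 ?k2 0 (int ?k1)"
      using Ncount_eq[of ?k1 ?k2 m "s-m"] e1 e3 by simp
    also have "T (a1+a2) ?k1 ?k2 0 (int ?k1) = T (a1+a2) ?k1 ?k2 (int m) (int (?k1 + s))"
    proof -
      have pq: "T (?k1+?k2+s) ?k1 ?k2 (int m) (int (?k1+s)) = T (?k1+?k2+s) ?k1 ?k2 0 (int ?k1)"
        by (rule PQ[OF h(1)])
      show ?thesis using pq unfolding e2 by simp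
    qed
    finally show "Ncount ?k1 ?k2 m (s - m) = (s choose m) * T (a1+a2) ?k1 ?k2 (int m) (int (a1-m+s))"
      by simp
  qed
  then show ?thesis using F_sum by simp
qed


end
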